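(* Fix an integer $l\ge -1$. For every $g\ge 4l+3$, \[\#\{S\in\mathcal{S}_g\mid e(S)=g-l\}=\sum_{k=-1}^{l}\ \sum_{\substack{\overline{x}\in\mathcal{Y}(k)\\ a(\overline{x})+b(\overline{x})-c(\overline{x})=2k+1-l}}\binom{g-3k-2}{k+1-a(\overline{x})-2b(\overline{x})}.\]
   Context: A numerical semigroup $S$ is a submonoid of $\mathbb{N}_0$ with finite complement; its genus is the size of the complement and $e(S)$ is the size of its minimal generating set $(S\setminus\{0\})\setminus((S\setminus\{0\})+(S\setminus\{0\}))$. $\mathcal{S}_g$ is the set of numerical semigroups of genus $g$. For $\overline{x}=(x_1,\ldots,x_t)\in\{1,2,3\}^t$ let $a(\overline{x})=\#\{i: x_i=2\}$, $b(\overline{x})=\#\{i: x_i=3\}$, and $c(\overline{x})=\#\{i\in[1,t]: \exists j_1,j_2\in[1,t],\ j_1+j_2=i,\ (x_{j_1},x_{j_2},x_i)=(1,1,2)\}$. For an integer $k\ge 0$, $\mathcal{Y}(k)$ is the set of tuples $\overline{x}\in\{1,2,3\}^{2k+1}$ such that (i) whenever $i_1,i_2,i_3\in[1,2k+1]$ satisfy $i_1+i_2=i_3$, $(x_{i_1},x_{i_2},x_{i_3})\ne(1,1,3)$, and (ii) $a(\overline{x})+2b(\overline{x})\le k+1$; $\mathcal{Y}(-1)=\{\emptyset\}$ consists of the empty tuple (with $a=b=c=0$). *)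

theory Defs
  imports Main
begin

definition numerical_semigroup :: "nat set \<Rightarrow> bool" where
  "numerical_semigroup S \<longleftrightarrow> 0 \<in> S \<and> (\<forall>x\<in>S. \<forall>y\<in>S. x + y \<in> S) \<and> finite (UNIV - S)"

definition genus :: "nat set \<Rightarrow> nat" where
  "genus S = card (UNIV - S)"

definition minimal_generators :: "nat set \<Rightarrow> nat set" where
  "minimal_generators S = (S - {0}) - {x + y | x y. x \<in> S - {0} \<and> y \<in> S - {0}}"

definition embedding_dim :: "nat set \<Rightarrow> nat" where
  "embedding_dim S = card (minimal_generators S)"

definition semigroups_of_genus :: "nat \<Rightarrow> nat set set" where
  "semigroups_of_genus g = {S. numerical_semigroup S \<and> genus S = g}"

text \<open>Tuples (x_1,...,x_t) are lists xs with x_i = xs ! (i - 1).\<close>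

definition cnt_a :: "nat list \<Rightarrow> nat" where
  "cnt_a xs = card {i \<in> {1..length xs}. xs ! (i - 1) = 2}"

definition cnt_b :: "nat list \<Rightarrow> nat" where
  "cnt_b xs = card {i \<in> {1..length xs}. xs ! (i - 1) = 3}"

definition cnt_c :: "nat list \<Rightarrow> nat" where
  "cnt_c xs = card {i \<in> {1..length xs}. \<exists>j1\<in>{1..length xs}. \<exists>j2\<in>{1..length xs}.
      j1 + j2 = i \<and> xs ! (j1 - 1) = 1 \<and> xs ! (j2 - 1) = 1 \<and> xs ! (i - 1) = 2}"

definition Y :: "int \<Rightarrow> nat list set" where
  "Y k = (if k = -1 then {[]} else
     {xs. k \<ge> 0 \<and> length xs = nat (2 * k + 1) \<and> set xs \<subseteq> {1, 2, 3} \<and>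
          (\<forall>i1\<in>{1..length xs}. \<forall>i2\<in>{1..length xs}. \<forall>i3\<in>{1..length xs}.
              i1 + i2 = i3 \<longrightarrow> (xs ! (i1 - 1), xs ! (i2 - 1), xs ! (i3 - 1)) \<noteq> (1, 1, 3)) \<and>
          int (cnt_a xs) + 2 * int (cnt_b xs) \<le> k + 1})"

end

theory Submission
  imports Defs
begin

definition sgK :: "nat \<Rightarrow> (nat \<Rightarrow> nat) \<Rightarrow> nat set" where
  "sgK m f = {n. n mod m = 0 \<or> f (n mod m) \<le> n div m}"

definition kvalid :: "nat \<Rightarrow> (nat \<Rightarrow> nat) \<Rightarrow> bool" where
  "kvalid m f \<longleftrightarrow> 1 \<le> m \<and> (\<forall>r\<in>{1..<m}. 1 \<le> f r) \<and>
     (\<forall>r s. 1 \<le> r \<longrightarrow> 1 \<le> s \<longrightarrow> r + s < m \<longrightarrow> f (r + s) \<le> f r + f s) \<and>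
     (\<forall>r s. r < m \<longrightarrow> s < m \<longrightarrow> m < r + s \<longrightarrow> f (r + s - m) \<le> f r + f s + 1)"

definition dec :: "nat \<Rightarrow> (nat \<Rightarrow> nat) \<Rightarrow> nat \<Rightarrow> bool" where
  "dec m f r \<longleftrightarrow> (\<exists>a\<in>{1..<m}. \<exists>b\<in>{1..<m}.
      (a + b = r \<and> f r = f a + f b) \<or> (a + b = r + m \<and> f r = f a + f b + 1))"

lemma add_divmod_cases:
  fixes x y m :: nat
  assumes "m > 0"
  shows "(x mod m + y mod m < m \<and> (x+y) mod m = x mod m + y mod m \<and> (x+y) div m = x div m + y div m) \<or>
         (x mod m + y mod m \<ge> m \<and> (x+y) mod m = x mod m + y mod m - m \<and> (x+y) div m = x div m + y div m + 1)"
proof -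
  have lt: "x mod m < m" "y mod m < m" using assms by auto
  have d: "(x + y) div m = x div m + y div m + (x mod m + y mod m) div m"
    by (rule div_add1_eq)
  have mo: "(x + y) mod m = (x mod m + y mod m) mod m" by (simp add: mod_add_eq)
  show ?thesis
  proof (cases "x mod m + y mod m < m")
    case True
    then show ?thesis using d mo by simp
  next
    case False
    have e: "x mod m + y mod m = m + (x mod m + y mod m - m)" using False by simp
    have tl: "x mod m + y mod m - m < m" using lt by linarith
    have "(m + (x mod m + y mod m - m)) div m = 1" using assms tl by (simp add: div_add_self1)
    then have "(x mod m + y mod m) div m = 1" using e by metis
    moreover have "(x mod m + y mod m) mod m = x mod m + y mod m - m" using False lt tl
      by (simp add: le_mod_geq)
    ultimately show ?thesis using d mo False by simp
  qed
qed

lemma sgK_closed: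
  assumes kv: "kvalid m f" and x: "x \<in> sgK m f" and y: "y \<in> sgK m f"
  shows "x + y \<in> sgK m f"
proof -
  have m0: "m > 0" using kv by (simp add: kvalid_def)
  let ?a = "x mod m" let ?b = "y mod m"
  have lt: "?a < m" "?b < m" using m0 by auto
  show ?thesis
  proof (cases "?a = 0 \<or> ?b = 0")
    case True
    then show ?thesis
    proof
      assume a0: "?a = 0"
      then have "(x+y) mod m = ?b" "(x + y) div m = x div m + y div m"
        using add_divmod_cases[OF m0, of x y] lt by auto
      then show ?thesis using y unfolding sgK_def by auto
    next
      assume b0: "?b = 0"
      then have "(x+y) mod m = ?a" "(x + y) div m = x div m + y div m"
        using add_divmod_cases[OF m0, of x y] lt by auto
      then show ?thesis using x unfolding sgK_def by auto
    qed
  next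
    case False
    then have fa: "f ?a \<le> x div m" and fb: "f ?b \<le> y div m" using x y unfolding sgK_def by auto
    from add_divmod_cases[OF m0, of x y] show ?thesis
    proof
      assume h: "?a + ?b < m \<and> (x+y) mod m = ?a + ?b \<and> (x+y) div m = x div m + y div m"
      have "f (?a + ?b) \<le> f ?a + f ?b" using kv False h unfolding kvalid_def by auto
      then show ?thesis using h fa fb unfolding sgK_def by auto
    next
      assume h: "?a + ?b \<ge> m \<and> (x+y) mod m = ?a + ?b - m \<and> (x+y) div m = x div m + y div m + 1"
      show ?thesis
      proof (cases "?a + ?b = m")
        case True then show ?thesis using h unfolding sgK_def by auto
      next
        case False
        then have "f (?a + ?b - m) \<le> f ?a + f ?b + 1" using kv h lt unfolding kvalid_def by auto
        then show ?thesis using h fa fb unfolding sgK_def by auto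
      qed
    qed
  qed
qed

lemma sgK_compl: "m > 0 \<Longrightarrow> UNIV - sgK m f = {n. n mod m \<noteq> 0 \<and> n div m < f (n mod m)}"
  unfolding sgK_def by auto

lemma sgK_compl_bij:
  assumes "m > 0"
  shows "bij_betw (\<lambda>(r, q). q * m + r) (SIGMA r:{1..<m}. {..<f r}) (UNIV - sgK m f)"
proof -
  have inj: "inj_on (\<lambda>(r, q). q * m + r) (SIGMA r:{1..<m}. {..<f r})"
  proof (rule inj_onI, clarsimp)
    fix r q r' q'
    assume h: "r < m" "r' < m" "q * m + r = q' * m + r'"
    have "(q * m + r) mod m = r" using h(1) by simp
    moreover have "(q' * m + r') mod m = r'" using h(2) by simp
    ultimately have rr: "r = r'" using h(3) by simp
    then have "q * m = q' * m" using h(3) by simp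
    then show "r = r' \<and> q = q'" using rr assms by simp
  qed
  have img: "(\<lambda>(r, q). q * m + r) ` (SIGMA r:{1..<m}. {..<f r}) = UNIV - sgK m f"
  proof
    show "(\<lambda>(r, q). q * m + r) ` (SIGMA r:{1..<m}. {..<f r}) \<subseteq> UNIV - sgK m f"
      using assms by (auto simp: sgK_compl)
  next
    show "UNIV - sgK m f \<subseteq> (\<lambda>(r, q). q * m + r) ` (SIGMA r:{1..<m}. {..<f r})"
    proof
      fix n assume "n \<in> UNIV - sgK m f"
      then have h: "n mod m \<noteq> 0" "n div m < f (n mod m)" using assms by (auto simp: sgK_compl)
      have "n = (n div m) * m + n mod m" by simp
      moreover have "(n mod m, n div m) \<in> (SIGMA r:{1..<m}. {..<f r})" using h assms by auto
      ultimately show "n \<in> (\<lambda>(r, q). q * m + r) ` (SIGMA r:{1..<m}. {..<f r})"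
        by (metis (no_types, lifting) case_prod_conv image_eqI)
    qed
  qed
  show ?thesis using inj img by (simp add: bij_betw_def)
qed

lemma sgK_numsg: assumes kv: "kvalid m f" shows "numerical_semigroup (sgK m f)"
proof -
  have m0: "m > 0" using kv by (simp add: kvalid_def)
  have "finite (UNIV - sgK m f)"
    using bij_betw_finite[OF sgK_compl_bij[OF m0]] by auto
  moreover have "0 \<in> sgK m f" by (simp add: sgK_def)
  ultimately show ?thesis using sgK_closed[OF kv] unfolding numerical_semigroup_def by blast
qed

lemma sgK_genus: assumes kv: "kvalid m f" shows "genus (sgK m f) = (\<Sum>r\<in>{1..<m}. f r)"
proof -
  have m0: "m > 0" using kv by (simp add: kvalid_def)
  have "genus (sgK m f) = card (SIGMA r:{1..<m}. {..<f r})"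
    unfolding genus_def using bij_betw_same_card[OF sgK_compl_bij[OF m0]] by simp
  also have "\<dots> = (\<Sum>r\<in>{1..<m}. f r)" by (simp add: card_SigmaI)
  finally show ?thesis .
qed


lemma sgK_mem_lt: "r < m \<Longrightarrow> q * m + r \<in> sgK m f \<longleftrightarrow> r = 0 \<or> f r \<le> q"
  unfolding sgK_def by auto

lemma kvalid_m0: "kvalid m f \<Longrightarrow> 0 < m" by (simp add: kvalid_def)

lemma sgK_m_in: "kvalid m f \<Longrightarrow> m \<in> sgK m f" unfolding sgK_def by simp

lemma sgK_small_notin: assumes "kvalid m f" "0 < n" "n < m" shows "n \<notin> sgK m f"
proof -
  have "1 \<le> f n" using assms unfolding kvalid_def by auto
  then show ?thesis using assms unfolding sgK_def by auto
qed

lemma sgK_mult_in: "0 < m \<Longrightarrow> q * m \<in> sgK m f" unfolding sgK_def by simp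

lemma sgK_w_in: "r < m \<Longrightarrow> f r * m + r \<in> sgK m f"
  using sgK_mem_lt[of r m "f r" f] by simp

lemma sgK_mingen:
  assumes kv: "kvalid m f"
  shows "minimal_generators (sgK m f) = insert m ((\<lambda>r. f r * m + r) ` {r \<in> {1..<m}. \<not> dec m f r})"
proof -
  let ?S = "sgK m f"
  have m0: "0 < m" using kv by (rule kvalid_m0)
  have notsum: "n \<in> minimal_generators ?S \<longleftrightarrow> n \<in> ?S \<and> n \<noteq> 0 \<and> (\<forall>x y. x \<in> ?S \<longrightarrow> y \<in> ?S \<longrightarrow> x \<noteq> 0 \<longrightarrow> y \<noteq> 0 \<longrightarrow> n \<noteq> x + y)" for n
    unfolding minimal_generators_def by auto
  show ?thesis
  proof (rule set_eqI, rule iffI)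
    fix n assume n: "n \<in> minimal_generators ?S"
    then have nS: "n \<in> ?S" and n0: "n \<noteq> 0"
      and ns: "\<And>x y. x \<in> ?S \<Longrightarrow> y \<in> ?S \<Longrightarrow> x \<noteq> 0 \<Longrightarrow> y \<noteq> 0 \<Longrightarrow> n \<noteq> x + y"
      using notsum by blast+
    define q where "q = n div m"
    define r where "r = n mod m"
    have nqr: "n = q * m + r" unfolding q_def r_def by simp
    have rm: "r < m" unfolding r_def using m0 by simp
    show "n \<in> insert m ((\<lambda>r. f r * m + r) ` {r \<in> {1..<m}. \<not> dec m f r})"
    proof (cases "r = 0")
      case True
      then have "q \<ge> 1" using n0 nqr by (cases q) auto
      have "q = 1"
      proof (rule ccontr)
        assume "q \<noteq> 1"
        then have "n = m + (q - 1) * m" using nqr True \<open>q \<ge> 1\<close>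
          by (metis add.right_neutral add_diff_inverse_nat less_one mult_Suc not_less plus_1_eq_Suc)
        moreover have "(q - 1) * m \<in> ?S" by (rule sgK_mult_in[OF m0])
        moreover have "(q - 1) * m \<noteq> 0" using \<open>q \<noteq> 1\<close> \<open>q \<ge> 1\<close> m0 by simp
        ultimately show False using ns[OF sgK_m_in[OF kv]] m0 by blast
      qed
      then show ?thesis using nqr True by simp
    next
      case False
      then have fr: "f r \<le> q" using nS nqr rm sgK_mem_lt by blast
      have w: "f r * m + r \<in> ?S" by (rule sgK_w_in[OF rm])
      have qeq: "q = f r"
      proof (rule ccontr)
        assume "q \<noteq> f r"
        have "q = f r + (q - f r)" using fr by simp
        then have "q * m = f r * m + (q - f r) * m" by (metis add_mult_distrib)
        then have "n = (f r * m + r) + (q - f r) * m" using nqr by simp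
        moreover have i1: "(q - f r) * m \<in> ?S" by (rule sgK_mult_in[OF m0])
        moreover have i2: "(q - f r) * m \<noteq> 0" using \<open>q \<noteq> f r\<close> fr m0 by simp
        moreover have "f r * m + r \<noteq> 0" using False by simp
        ultimately show False using ns[OF w i1] by blast
      qed
      have nd: "\<not> dec m f r"
      proof
        assume "dec m f r"
        then obtain a b where ab: "a \<in> {1..<m}" "b \<in> {1..<m}"
          and c: "(a + b = r \<and> f r = f a + f b) \<or> (a + b = r + m \<and> f r = f a + f b + 1)"
          unfolding dec_def by blast
        have wa: "f a * m + a \<in> ?S" "f b * m + b \<in> ?S" using ab sgK_w_in by auto
        have "n = (f a * m + a) + (f b * m + b)"
          using c nqr qeq by (auto simp: algebra_simps)
        then show False using ns[OF wa] ab by simp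
      qed
      show ?thesis using nqr qeq nd False rm by auto
    qed
  next
    fix n assume n: "n \<in> insert m ((\<lambda>r. f r * m + r) ` {r \<in> {1..<m}. \<not> dec m f r})"
    show "n \<in> minimal_generators ?S"
    proof (cases "n = m")
      case True
      have "\<forall>x y. x \<in> ?S \<longrightarrow> y \<in> ?S \<longrightarrow> x \<noteq> 0 \<longrightarrow> y \<noteq> 0 \<longrightarrow> m \<noteq> x + y"
      proof (intro allI impI)
        fix x y assume "x \<in> ?S" "y \<in> ?S" "x \<noteq> 0" "y \<noteq> 0"
        then show "m \<noteq> x + y" using sgK_small_notin[OF kv, of x] by auto
      qed
      then show ?thesis using True notsum sgK_m_in[OF kv] m0 by auto
    next
      case False
      then obtain r where r: "r \<in> {1..<m}" "\<not> dec m f r" and nr: "n = f r * m + r" using n by auto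
      have rm: "r < m" using r by simp
      have nmod: "n mod m = r" "n div m = f r" using nr rm by auto
      have "\<forall>x y. x \<in> ?S \<longrightarrow> y \<in> ?S \<longrightarrow> x \<noteq> 0 \<longrightarrow> y \<noteq> 0 \<longrightarrow> n \<noteq> x + y"
      proof (intro allI impI notI)
        fix x y assume xS: "x \<in> ?S" and yS: "y \<in> ?S" and x0: "x \<noteq> 0" and y0: "y \<noteq> 0" and e: "n = x + y"
        have xm: "x mod m = 0 \<or> f (x mod m) \<le> x div m" using xS unfolding sgK_def by simp
        have ym: "y mod m = 0 \<or> f (y mod m) \<le> y div m" using yS unfolding sgK_def by simp
        have alt: "(x mod m + y mod m < m \<and> n mod m = x mod m + y mod m \<and> n div m = x div m + y div m) \<or>
         (x mod m + y mod m \<ge> m \<and> n mod m = x mod m + y mod m - m \<and> n div m = x div m + y div m + 1)"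
          using add_divmod_cases[OF m0, of x y] e by simp
        have xlt: "x mod m < m" "y mod m < m" using m0 by auto
        show False
        proof (cases "x mod m = 0")
          case True
          have "x div m \<ge> 1" using True x0 by (metis div_mult_mod_eq less_one mult_eq_0_iff not_less add.right_neutral)
          then have "y mod m = r" "y div m < f r" using alt True nmod xlt by auto
          then show False using ym r by auto
        next
          case xnz: False
          show False
          proof (cases "y mod m = 0")
            case True
            have "y div m \<ge> 1" using True y0 by (metis div_mult_mod_eq less_one mult_eq_0_iff not_less add.right_neutral)
            then have "x mod m = r" "x div m < f r" using alt True nmod xlt by auto
            then show False using xm r by auto
          next
            case ynz: False
            have fa: "f (x mod m) \<le> x div m" "f (y mod m) \<le> y div m" using xm ym xnz ynz by auto
            have abr: "x mod m \<in> {1..<m}" "y mod m \<in> {1..<m}" using xnz ynz xlt by auto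
            from alt show False
            proof
              assume h: "x mod m + y mod m < m \<and> n mod m = x mod m + y mod m \<and> n div m = x div m + y div m"
              have "f r \<le> f (x mod m) + f (y mod m)" using kv h nmod xnz ynz unfolding kvalid_def by auto
              then have "f r = f (x mod m) + f (y mod m)" using h nmod fa by auto
              moreover have "x mod m + y mod m = r" using h nmod by simp
              ultimately have "dec m f r" unfolding dec_def using abr by blast
              then show False using r by simp
            next
              assume h: "x mod m + y mod m \<ge> m \<and> n mod m = x mod m + y mod m - m \<and> n div m = x div m + y div m + 1"
              have gt: "x mod m + y mod m > m" using h nmod r by auto
              have "f r \<le> f (x mod m) + f (y mod m) + 1" using kv h nmod xlt gt unfolding kvalid_def by auto
              then have "f r = f (x mod m) + f (y mod m) + 1" using h nmod fa by auto
              moreover have "x mod m + y mod m = r + m" using h nmod gt by auto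
              ultimately have "dec m f r" unfolding dec_def using abr by blast
              then show False using r by simp
            qed
          qed
        qed
      qed
      moreover have "n \<in> ?S" using nr sgK_w_in[OF rm] by simp
      moreover have "n \<noteq> 0" using nr r by simp
      ultimately show ?thesis using notsum by blast
    qed
  qed
qed

lemma sgK_edim:
  assumes kv: "kvalid m f"
  shows "embedding_dim (sgK m f) = 1 + card {r \<in> {1..<m}. \<not> dec m f r}"
proof -
  have m0: "0 < m" using kv by (rule kvalid_m0)
  have inj: "inj_on (\<lambda>r. f r * m + r) {r \<in> {1..<m}. \<not> dec m f r}"
  proof (rule inj_onI)
    fix x y assume "x \<in> {r \<in> {1..<m}. \<not> dec m f r}" "y \<in> {r \<in> {1..<m}. \<not> dec m f r}"
      "f x * m + x = f y * m + y"
    then show "x = y" by (metis (no_types, lifting) atLeastLessThan_iff mem_Collect_eq mod_less mod_mult_self3)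
  qed
  have nm: "m \<notin> (\<lambda>r. f r * m + r) ` {r \<in> {1..<m}. \<not> dec m f r}"
  proof
    assume "m \<in> (\<lambda>r. f r * m + r) ` {r \<in> {1..<m}. \<not> dec m f r}"
    then obtain r where "r \<in> {1..<m}" "m = f r * m + r" by auto
    then have "m mod m = r" by (metis atLeastLessThan_iff mod_less mod_mult_self3)
    then show False using \<open>r \<in> {1..<m}\<close> by simp
  qed
  show ?thesis unfolding embedding_dim_def sgK_mingen[OF kv]
    using nm card_image[OF inj] by simp
qed

lemma sgK_unique:
  assumes kv: "kvalid m f" and kv': "kvalid m' f'" and e: "sgK m f = sgK m' f'"
  shows "m = m' \<and> (\<forall>r\<in>{1..<m}. f r = f' r)"
proof -
  have m0: "0 < m" "0 < m'" using kv kv' kvalid_m0 by auto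
  have "\<not> m < m'" using sgK_m_in[OF kv] sgK_small_notin[OF kv', of m] e m0 by auto
  moreover have "\<not> m' < m" using sgK_m_in[OF kv'] sgK_small_notin[OF kv, of m'] e m0 by auto
  ultimately have mm: "m = m'" by simp
  have "f r = f' r" if r: "r \<in> {1..<m}" for r
  proof -
    have rm: "r < m" "r \<noteq> 0" using r by auto
    have "f r * m + r \<in> sgK m' f'" using sgK_w_in[OF rm(1), of f] e by simp
    then have "f' r \<le> f r" using sgK_mem_lt[of r m' "f r" f'] rm mm by simp
    moreover have "f' r * m + r \<in> sgK m f" using sgK_w_in[OF rm(1), of f'] e mm by simp
    then have "f r \<le> f' r" using sgK_mem_lt[of r m "f' r" f] rm by simp
    ultimately show ?thesis by simp
  qed
  then show ?thesis using mm by simp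
qed

lemma sgK_cong:
  assumes "0 < m" "\<forall>r\<in>{1..<m}. f r = f' r"
  shows "sgK m f = sgK m f'"
proof -
  have "f (n mod m) = f' (n mod m)" if "n mod m \<noteq> 0" for n
  proof -
    have "n mod m \<in> {1..<m}" using that assms(1) by simp
    then show ?thesis using assms(2) by blast
  qed
  then show ?thesis unfolding sgK_def by (metis (mono_tags, lifting))
qed

lemma kvalid_cong:
  assumes kv: "kvalid m f" and eq: "\<forall>r\<in>{1..<m}. f r = f' r"
  shows "kvalid m f'"
proof -
  have e: "\<And>r. 1 \<le> r \<Longrightarrow> r < m \<Longrightarrow> f' r = f r" using eq by auto
  show ?thesis using kv unfolding kvalid_def
    apply (intro conjI)
    apply simp
    apply (simp add: e)
    apply (intro allI impI; simp add: e)
    apply (intro allI impI)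
    apply (subst (1 2 3) e; simp)
    done
qed


lemma numsg_rep:
  assumes ns: "numerical_semigroup S"
  shows "\<exists>m f. kvalid m f \<and> S = sgK m f"
proof -
  have S0: "0 \<in> S" and cl: "\<And>x y. x \<in> S \<Longrightarrow> y \<in> S \<Longrightarrow> x + y \<in> S" and fin: "finite (UNIV - S)"
    using ns unfolding numerical_semigroup_def by auto
  obtain b where b: "\<forall>n\<in>UNIV - S. n < b" using fin finite_nat_set_iff_bounded by blast
  have big: "n \<ge> b \<Longrightarrow> n \<in> S" for n using b by (meson DiffI UNIV_I not_less)
  define m where "m = (LEAST n. n \<in> S \<and> 0 < n)"
  have ex: "Suc b \<in> S \<and> 0 < Suc b" using big by simp
  have mS: "m \<in> S \<and> 0 < m" unfolding m_def by (rule LeastI[where P="\<lambda>n. n \<in> S \<and> 0 < n", OF ex])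
  then have m0: "0 < m" and mS': "m \<in> S" by auto
  have small: "0 < n \<Longrightarrow> n < m \<Longrightarrow> n \<notin> S" for n unfolding m_def using not_less_Least by blast
  have addm: "x \<in> S \<Longrightarrow> x + q * m \<in> S" for x q
  proof (induction q)
    case 0 then show ?case by simp
  next
    case (Suc q) then have "x + q * m + m \<in> S" using cl[OF _ mS'] by blast
    then show ?case by (simp add: algebra_simps)
  qed
  define f where "f r = (LEAST q. q * m + r \<in> S)" for r
  have exq: "b * m + r \<in> S" for r
  proof -
    have "b \<le> b * m" using m0 by simp
    then have "b \<le> b * m + r" by linarith
    then show ?thesis using big by blast
  qed
  have key: "q * m + r \<in> S \<longleftrightarrow> f r \<le> q" for q r
  proof
    assume "q * m + r \<in> S" then show "f r \<le> q" unfolding f_def by (rule Least_le)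
  next
    assume h: "f r \<le> q"
    have "f r * m + r \<in> S" unfolding f_def by (rule LeastI[where P="\<lambda>q. q * m + r \<in> S", OF exq])
    then have "f r * m + r + (q - f r) * m \<in> S" by (rule addm)
    moreover have "f r * m + r + (q - f r) * m = q * m + r"
    proof -
      have "q = f r + (q - f r)" using h by simp
      then have "q * m = f r * m + (q - f r) * m" by (metis add_mult_distrib)
      then show ?thesis by simp
    qed
    ultimately show "q * m + r \<in> S" by simp
  qed
  have Seq: "S = sgK m f"
  proof (rule set_eqI)
    fix n
    have n: "n = (n div m) * m + n mod m" by simp
    show "n \<in> S \<longleftrightarrow> n \<in> sgK m f"
    proof (cases "n mod m = 0")
      case True
      then have "n \<in> S" using addm[OF S0, of "n div m"] n by simp
      then show ?thesis using True unfolding sgK_def by simp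
    next
      case False
      have "n \<in> S \<longleftrightarrow> f (n mod m) \<le> n div m" using key[of "n div m" "n mod m"] n by simp
      then show ?thesis using False unfolding sgK_def by simp
    qed
  qed
  have kv: "kvalid m f"
    unfolding kvalid_def
  proof (intro conjI ballI allI impI)
    show "1 \<le> m" using m0 by simp
  next
    fix r assume r: "r \<in> {1..<m}"
    show "1 \<le> f r"
    proof (rule ccontr)
      assume "\<not> 1 \<le> f r"
      then have "f r \<le> 0" by simp
      then have "0 * m + r \<in> S" using key by blast
      then show False using small r by auto
    qed
  next
    fix r s assume "1 \<le> r" "1 \<le> s" "r + s < m"
    have "f r * m + r \<in> S" "f s * m + s \<in> S" using key by auto
    then have "(f r * m + r) + (f s * m + s) \<in> S" by (rule cl)
    moreover have "(f r * m + r) + (f s * m + s) = (f r + f s) * m + (r + s)" by (simp add: algebra_simps)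
    ultimately show "f (r + s) \<le> f r + f s" using key by simp
  next
    fix r s assume "r < m" "s < m" "m < r + s"
    have "f r * m + r \<in> S" "f s * m + s \<in> S" using key by auto
    then have "(f r * m + r) + (f s * m + s) \<in> S" by (rule cl)
    moreover have "(f r * m + r) + (f s * m + s) = (f r + f s + 1) * m + (r + s - m)"
      using \<open>m < r + s\<close> by (simp add: algebra_simps)
    ultimately have "(f r + f s + 1) * m + (r + s - m) \<in> S" by (simp only:)
    then show "f (r + s - m) \<le> f r + f s + 1" by (simp only: key)
  qed
  show ?thesis using kv Seq by blast
qed


lemma cover_nonwrap:
  assumes "finite X" and cov: "\<forall>j\<in>{1..<r}. j \<in> X \<or> r - j \<in> X"
  shows "r - 1 \<le> 2 * card (X \<inter> {1..<r})"
proof -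
  let ?A = "X \<inter> {1..<r}"
  have "{1..<r} \<subseteq> ?A \<union> (\<lambda>j. r - j) ` ?A"
  proof
    fix j assume j: "j \<in> {1..<r}"
    show "j \<in> ?A \<union> (\<lambda>j. r - j) ` ?A"
    proof (cases "j \<in> X")
      case True then show ?thesis using j by auto
    next
      case False
      then have "r - j \<in> X" using cov j by auto
      moreover have "r - j \<in> {1..<r}" "j = r - (r - j)" using j by auto
      ultimately show ?thesis by blast
    qed
  qed
  then have "card {1..<r} \<le> card (?A \<union> (\<lambda>j. r - j) ` ?A)"
    by (intro card_mono) (use assms in auto)
  also have "\<dots> \<le> card ?A + card ((\<lambda>j. r - j) ` ?A)" by (rule card_Un_le)
  also have "\<dots> \<le> 2 * card ?A" using card_image_le[of ?A "\<lambda>j. r - j"] assms by simp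
  finally show ?thesis by simp
qed

lemma cover_wrap:
  assumes "finite X" and cov: "\<forall>a\<in>{r<..<m}. a \<in> X \<or> r + m - a \<in> X"
  shows "m - 1 - r \<le> 2 * card (X \<inter> {r<..<m})"
proof -
  let ?A = "X \<inter> {r<..<m}"
  have "{r<..<m} \<subseteq> ?A \<union> (\<lambda>a. r + m - a) ` ?A"
  proof
    fix j assume j: "j \<in> {r<..<m}"
    show "j \<in> ?A \<union> (\<lambda>a. r + m - a) ` ?A"
    proof (cases "j \<in> X")
      case True then show ?thesis using j by auto
    next
      case False
      then have "r + m - j \<in> X" using cov j by auto
      moreover have "r + m - j \<in> {r<..<m}" "j = r + m - (r + m - j)" using j by auto
      ultimately show ?thesis by blast
    qed
  qed
  then have "card {r<..<m} \<le> card (?A \<union> (\<lambda>a. r + m - a) ` ?A)"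
    by (intro card_mono) (use assms in auto)
  also have "\<dots> \<le> card ?A + card ((\<lambda>a. r + m - a) ` ?A)" by (rule card_Un_le)
  also have "\<dots> \<le> 2 * card ?A" using card_image_le[of ?A "\<lambda>a. r + m - a"] assms by simp
  finally show ?thesis by simp
qed

lemma cover_both:
  assumes "finite X" "r \<in> {1..<m}"
    and "\<forall>j\<in>{1..<r}. j \<in> X \<or> r - j \<in> X"
    and "\<forall>a\<in>{r<..<m}. a \<in> X \<or> r + m - a \<in> X"
  shows "m \<le> 2 * card (X - {r}) + 2"
proof -
  have "card (X \<inter> {1..<r}) + card (X \<inter> {r<..<m}) = card ((X \<inter> {1..<r}) \<union> (X \<inter> {r<..<m}))"
    by (rule card_Un_disjoint[symmetric]) (use assms(1) in auto)
  also have "\<dots> \<le> card (X - {r})"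
    by (rule card_mono) (use assms(1) in auto)
  finally have "card (X \<inter> {1..<r}) + card (X \<inter> {r<..<m}) \<le> card (X - {r})" .
  moreover have "r - 1 \<le> 2 * card (X \<inter> {1..<r})" using cover_nonwrap assms by blast
  moreover have "m - 1 - r \<le> 2 * card (X \<inter> {r<..<m})" using cover_wrap assms by blast
  ultimately show ?thesis using assms(2) by auto
qed

definition Bs :: "nat \<Rightarrow> (nat \<Rightarrow> nat) \<Rightarrow> nat set" where
  "Bs m f = {r \<in> {1..<m}. 2 \<le> f r}"

definition hh :: "nat \<Rightarrow> (nat \<Rightarrow> nat) \<Rightarrow> nat" where
  "hh m f = (\<Sum>r\<in>{1..<m}. (f r - 1))"

lemma Bs_finite: "finite (Bs m f)" unfolding Bs_def by simp

lemma card_Bs: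
  assumes r0: "r0 \<in> {1..<m}"
  shows "card (Bs m f - {r0}) + (f r0 - 1) \<le> hh m f"
proof -
  have "hh m f = (f r0 - 1) + (\<Sum>r\<in>{1..<m} - {r0}. (f r - 1))"
    unfolding hh_def using r0 by (simp add: sum.remove)
  moreover have "(\<Sum>r\<in>Bs m f - {r0}. (f r - 1)) \<le> (\<Sum>r\<in>{1..<m} - {r0}. (f r - 1))"
    by (rule sum_mono2) (auto simp: Bs_def)
  moreover have "card (Bs m f - {r0}) \<le> (\<Sum>r\<in>Bs m f - {r0}. (f r - 1))"
  proof -
    have "(\<Sum>r\<in>Bs m f - {r0}. (1::nat)) \<le> (\<Sum>r\<in>Bs m f - {r0}. (f r - 1))"
      by (rule sum_mono) (auto simp: Bs_def)
    then show ?thesis by simp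
  qed
  ultimately show ?thesis by linarith
qed

lemma kv_ge1: "kvalid m f \<Longrightarrow> r \<in> {1..<m} \<Longrightarrow> 1 \<le> f r" unfolding kvalid_def by blast

lemma kv_nonwrap: "kvalid m f \<Longrightarrow> 1 \<le> r \<Longrightarrow> 1 \<le> s \<Longrightarrow> r + s < m \<Longrightarrow> f (r + s) \<le> f r + f s"
  unfolding kvalid_def by blast

lemma kv_wrap: "kvalid m f \<Longrightarrow> r < m \<Longrightarrow> s < m \<Longrightarrow> m < r + s \<Longrightarrow> f (r + s - m) \<le> f r + f s + 1"
  unfolding kvalid_def by blast

lemma inBs: "kvalid m f \<Longrightarrow> j \<in> {1..<m} \<Longrightarrow> f j \<noteq> 1 \<Longrightarrow> j \<in> Bs m f"
  unfolding Bs_def using kv_ge1[of m f j] by auto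

lemma core_le3:
  assumes kv: "kvalid m f" and hm: "3 * hh m f \<le> m" and r: "r \<in> {1..<m}"
  shows "f r \<le> 3"
proof (rule ccontr)
  assume "\<not> f r \<le> 3"
  then have f4: "4 \<le> f r" by simp
  have c1: "\<forall>j\<in>{1..<r}. j \<in> Bs m f \<or> r - j \<in> Bs m f"
  proof
    fix j assume j: "j \<in> {1..<r}"
    have "f (j + (r - j)) \<le> f j + f (r - j)" using kv_nonwrap[OF kv, of j "r - j"] j r by auto
    then have "f j \<noteq> 1 \<or> f (r - j) \<noteq> 1" using f4 j by auto
    moreover have "j \<in> {1..<m}" "r - j \<in> {1..<m}" using j r by auto
    ultimately show "j \<in> Bs m f \<or> r - j \<in> Bs m f" using inBs[OF kv] by blast
  qed
  have c2: "\<forall>a\<in>{r<..<m}. a \<in> Bs m f \<or> r + m - a \<in> Bs m f"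
  proof
    fix a assume a: "a \<in> {r<..<m}"
    have "f (a + (r + m - a) - m) \<le> f a + f (r + m - a) + 1" using kv_wrap[OF kv, of a "r + m - a"] a r by auto
    moreover have "a + (r + m - a) - m = r" using a by auto
    ultimately have "f a \<noteq> 1 \<or> f (r + m - a) \<noteq> 1" using f4 by auto
    moreover have "a \<in> {1..<m}" "r + m - a \<in> {1..<m}" using a r by auto
    ultimately show "a \<in> Bs m f \<or> r + m - a \<in> Bs m f" using inBs[OF kv] by blast
  qed
  have "m \<le> 2 * card (Bs m f - {r}) + 2" using cover_both[OF Bs_finite r c1 c2] .
  moreover have "card (Bs m f - {r}) + (f r - 1) \<le> hh m f" using card_Bs[OF r] .
  ultimately show False using hm f4 by linarith
qed

lemma core_3:
  assumes kv: "kvalid m f" and hm: "3 * hh m f \<le> m" and r: "r \<in> {1..<m}" and f3: "f r = 3"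
  shows "r + 3 \<le> 2 * hh m f \<and> dec m f r"
proof -
  have c1: "\<forall>j\<in>{1..<r}. j \<in> Bs m f \<or> r - j \<in> Bs m f"
  proof
    fix j assume j: "j \<in> {1..<r}"
    have "f (j + (r - j)) \<le> f j + f (r - j)" using kv_nonwrap[OF kv, of j "r - j"] j r by auto
    then have "f j \<noteq> 1 \<or> f (r - j) \<noteq> 1" using f3 j by auto
    moreover have "j \<in> {1..<m}" "r - j \<in> {1..<m}" using j r by auto
    ultimately show "j \<in> Bs m f \<or> r - j \<in> Bs m f" using inBs[OF kv] by blast
  qed
  have cb: "card (Bs m f - {r}) + 2 \<le> hh m f" using card_Bs[OF r, of f] f3 by simp
  have "r - 1 \<le> 2 * card (Bs m f \<inter> {1..<r})" using cover_nonwrap[OF Bs_finite c1] .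
  moreover have "card (Bs m f \<inter> {1..<r}) \<le> card (Bs m f - {r})"
    by (rule card_mono) (auto simp: Bs_finite)
  ultimately have p1: "r + 3 \<le> 2 * hh m f" using cb r by auto
  have "dec m f r"
  proof (rule ccontr)
    assume nd: "\<not> dec m f r"
    have c2: "\<forall>a\<in>{r<..<m}. a \<in> Bs m f \<or> r + m - a \<in> Bs m f"
    proof
      fix a assume a: "a \<in> {r<..<m}"
      have "\<not> (f a = 1 \<and> f (r + m - a) = 1)"
      proof
        assume "f a = 1 \<and> f (r + m - a) = 1"
        then have "dec m f r" unfolding dec_def using a r f3
          by (intro bexI[of _ a] bexI[of _ "r + m - a"]) auto
        then show False using nd by simp
      qed
      moreover have "a \<in> {1..<m}" "r + m - a \<in> {1..<m}" using a r by auto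
    ultimately show "a \<in> Bs m f \<or> r + m - a \<in> Bs m f" using inBs[OF kv] by blast
    qed
    have "m \<le> 2 * card (Bs m f - {r}) + 2" using cover_both[OF Bs_finite r c1 c2] .
    then show False using cb hm by linarith
  qed
  then show ?thesis using p1 by simp
qed

lemma core_2big:
  assumes kv: "kvalid m f" and r: "r \<in> {1..<m}" and f2: "f r = 2" and big: "2 * hh m f \<le> r"
  shows "dec m f r"
proof (rule ccontr)
  assume nd: "\<not> dec m f r"
  have c1: "\<forall>j\<in>{1..<r}. j \<in> Bs m f \<or> r - j \<in> Bs m f"
  proof
    fix j assume j: "j \<in> {1..<r}"
    have "\<not> (f j = 1 \<and> f (r - j) = 1)"
    proof
      assume "f j = 1 \<and> f (r - j) = 1"
      then have "dec m f r" unfolding dec_def using j r f2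
        by (intro bexI[of _ j] bexI[of _ "r - j"]) auto
      then show False using nd by simp
    qed
    moreover have "j \<in> {1..<m}" "r - j \<in> {1..<m}" using j r by auto
    ultimately show "j \<in> Bs m f \<or> r - j \<in> Bs m f" using inBs[OF kv] by blast
  qed
  have cb: "card (Bs m f - {r}) + 1 \<le> hh m f" using card_Bs[OF r, of f] f2 by simp
  have "r - 1 \<le> 2 * card (Bs m f \<inter> {1..<r})" using cover_nonwrap[OF Bs_finite c1] .
  moreover have "card (Bs m f \<inter> {1..<r}) \<le> card (Bs m f - {r})"
    by (rule card_mono) (auto simp: Bs_finite)
  ultimately show False using cb big r by auto
qed

lemma core_2:
  assumes kv: "kvalid m f" and r: "r \<in> {1..<m}" and f2: "f r = 2"
  shows "dec m f r \<longleftrightarrow> (\<exists>j1 j2. 1 \<le> j1 \<and> 1 \<le> j2 \<and> j1 + j2 = r \<and> f j1 = 1 \<and> f j2 = 1)"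
proof
  assume "dec m f r"
  then obtain a b where ab: "a \<in> {1..<m}" "b \<in> {1..<m}"
    and c: "(a + b = r \<and> f r = f a + f b) \<or> (a + b = r + m \<and> f r = f a + f b + 1)"
    unfolding dec_def by blast
  have "1 \<le> f a" "1 \<le> f b" using kv_ge1[OF kv] ab by auto
  then show "\<exists>j1 j2. 1 \<le> j1 \<and> 1 \<le> j2 \<and> j1 + j2 = r \<and> f j1 = 1 \<and> f j2 = 1"
    using c f2 ab by auto
next
  assume "\<exists>j1 j2. 1 \<le> j1 \<and> 1 \<le> j2 \<and> j1 + j2 = r \<and> f j1 = 1 \<and> f j2 = 1"
  then obtain j1 j2 where j: "1 \<le> j1" "1 \<le> j2" "j1 + j2 = r" "f j1 = 1" "f j2 = 1" by blast
  then show "dec m f r" unfolding dec_def using r f2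
    by (intro bexI[of _ j1] bexI[of _ j2]) auto
qed

lemma core_1:
  assumes kv: "kvalid m f" and f1: "f r = 1"
  shows "\<not> dec m f r"
proof
  assume "dec m f r"
  then obtain a b where ab: "a \<in> {1..<m}" "b \<in> {1..<m}"
    and c: "(a + b = r \<and> f r = f a + f b) \<or> (a + b = r + m \<and> f r = f a + f b + 1)"
    unfolding dec_def by blast
  have "1 \<le> f a" "1 \<le> f b" using kv_ge1[OF kv] ab by auto
  then show False using c f1 by auto
qed


lemma sum_vals:
  assumes "finite A" "\<forall>i\<in>A. f i \<in> {1,2,3::nat}"
  shows "(\<Sum>i\<in>A. (f i - 1)) = card {i\<in>A. f i = 2} + 2 * card {i\<in>A. f i = 3}"
proof -
  have "(\<Sum>i\<in>A. (f i - 1)) = (\<Sum>i\<in>A. ((if f i = 2 then 1 else 0) + (if f i = 3 then 2 else 0)))"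
    by (rule sum.cong) (use assms(2) in auto)
  also have "\<dots> = (\<Sum>i\<in>A. (if f i = 2 then 1 else 0)) + (\<Sum>i\<in>A. (if f i = 3 then 2 else 0))"
    by (rule sum.distrib)
  also have "(\<Sum>i\<in>A. (if f i = 2 then 1 else 0)) = (\<Sum>i\<in>{i\<in>A. f i = 2}. (1::nat))"
    using sum.inter_filter[OF assms(1), of "\<lambda>_. (1::nat)" "\<lambda>i. f i = 2"] by simp
  also have "(\<Sum>i\<in>A. (if f i = 3 then 2 else 0)) = (\<Sum>i\<in>{i\<in>A. f i = 3}. (2::nat))"
    using sum.inter_filter[OF assms(1), of "\<lambda>_. (2::nat)" "\<lambda>i. f i = 3"] by simp
  finally show ?thesis by simp
qed

lemma map_upt_nth:
  assumes "i \<in> {1..p}"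
  shows "map f [1..<p+1] ! (i - 1) = f i"
proof -
  have i: "i - 1 < p" "1 \<le> i" using assms by auto
  have "[1..<p+1] ! (i - 1) = 1 + (i - 1)" using i by (simp del: upt_Suc)
  then have "[1..<p+1] ! (i - 1) = i" using i by simp
  then show ?thesis using i by (simp del: upt_Suc)
qed

lemma cnt_a_map: "cnt_a (map f [1..<p+1]) = card {i\<in>{1..p}. f i = 2}"
  unfolding cnt_a_def by (rule arg_cong[where f=card]) (auto simp del: upt_Suc simp: map_upt_nth)

lemma cnt_b_map: "cnt_b (map f [1..<p+1]) = card {i\<in>{1..p}. f i = 3}"
  unfolding cnt_b_def by (rule arg_cong[where f=card]) (auto simp del: upt_Suc simp: map_upt_nth)

lemma cnt_c_map: "cnt_c (map f [1..<p+1]) =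
  card {i\<in>{1..p}. \<exists>j1\<in>{1..p}. \<exists>j2\<in>{1..p}. j1 + j2 = i \<and> f j1 = 1 \<and> f j2 = 1 \<and> f i = 2}"
  unfolding cnt_c_def
proof (rule arg_cong[where f=card], rule Collect_cong)
  fix i
  show "(i \<in> {1..length (map f [1..<p + 1])} \<and>
         (\<exists>j1\<in>{1..length (map f [1..<p + 1])}. \<exists>j2\<in>{1..length (map f [1..<p + 1])}.
             j1 + j2 = i \<and> map f [1..<p + 1] ! (j1 - 1) = 1 \<and> map f [1..<p + 1] ! (j2 - 1) = 1 \<and>
             map f [1..<p + 1] ! (i - 1) = 2)) =
        (i \<in> {1..p} \<and> (\<exists>j1\<in>{1..p}. \<exists>j2\<in>{1..p}. j1 + j2 = i \<and> f j1 = 1 \<and> f j2 = 1 \<and> f i = 2))"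
  proof -
    have len: "length (map f [1..<p + 1]) = p" by simp
    have eq: "\<And>j. j \<in> {1..p} \<Longrightarrow> map f [1..<p+1] ! (j - 1) = f j" by (rule map_upt_nth)
    show ?thesis unfolding len
      apply (intro conj_cong refl bex_cong)
      apply (auto simp del: upt_Suc simp: eq)
      done
  qed
qed

lemma hsplit:
  assumes pm: "p < m" and v1: "\<forall>i\<in>{1..p}. f i \<in> {1,2,3}" and v2: "\<forall>i\<in>{p+1..<m}. f i \<in> {1,2}"
  shows "hh m f = cnt_a (map f [1..<p+1]) + 2 * cnt_b (map f [1..<p+1]) + card {r\<in>{p+1..<m}. f r = 2}"
proof -
  have split: "{1..<m} = {1..p} \<union> {p+1..<m}" using pm by auto
  have "hh m f = (\<Sum>r\<in>{1..p}. (f r - 1)) + (\<Sum>r\<in>{p+1..<m}. (f r - 1))"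
    unfolding hh_def split by (rule sum.union_disjoint) auto
  moreover have "(\<Sum>r\<in>{1..p}. (f r - 1)) = card {i\<in>{1..p}. f i = 2} + 2 * card {i\<in>{1..p}. f i = 3}"
    by (rule sum_vals) (use v1 in auto)
  moreover have "(\<Sum>r\<in>{p+1..<m}. (f r - 1)) = card {i\<in>{p+1..<m}. f i = 2} + 2 * card {i\<in>{p+1..<m}. f i = 3}"
    by (rule sum_vals) (use v2 in auto)
  moreover have "{i\<in>{p+1..<m}. f i = 3} = {}" using v2 by fastforce
  ultimately show ?thesis unfolding cnt_a_map cnt_b_map by (simp del: upt_Suc)
qed

lemma core_count:
  assumes kv: "kvalid m f" and hm: "3 * hh m f \<le> m" and pdef: "p = 2 * hh m f - 1"
  shows "p < m"
    and "\<forall>i\<in>{1..<m}. f i \<in> {1,2,3}"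
    and "\<forall>i\<in>{p+1..<m}. f i \<in> {1,2}"
    and "card {r\<in>{1..<m}. dec m f r} = cnt_b (map f [1..<p+1]) + cnt_c (map f [1..<p+1]) + card {r\<in>{p+1..<m}. f r = 2}"
proof -
  have m0: "0 < m" using kv kvalid_m0 by blast
  show pm: "p < m" using hm pdef m0 by linarith
  show v: "\<forall>i\<in>{1..<m}. f i \<in> {1,2,3}"
  proof
    fix i assume i: "i \<in> {1..<m}"
    have "1 \<le> f i" "f i \<le> 3" using kv_ge1[OF kv i] core_le3[OF kv hm i] by auto
    then show "f i \<in> {1,2,3}" by auto
  qed
  show v2: "\<forall>i\<in>{p+1..<m}. f i \<in> {1,2}"
  proof
    fix i assume i: "i \<in> {p+1..<m}"
    then have i': "i \<in> {1..<m}" by auto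
    have "f i \<noteq> 3"
    proof
      assume "f i = 3"
      then have "i + 3 \<le> 2 * hh m f" using core_3[OF kv hm i'] by simp
      then show False using i pdef by auto
    qed
    then show "f i \<in> {1,2}" using v i' by auto
  qed
  let ?C = "{i\<in>{1..p}. \<exists>j1\<in>{1..p}. \<exists>j2\<in>{1..p}. j1 + j2 = i \<and> f j1 = 1 \<and> f j2 = 1 \<and> f i = 2}"
  have seteq: "{r\<in>{1..<m}. dec m f r} = ({i\<in>{1..p}. f i = 3} \<union> ?C) \<union> {r\<in>{p+1..<m}. f r = 2}"
  proof (rule set_eqI, rule iffI)
    fix r assume "r \<in> {r\<in>{1..<m}. dec m f r}"
    then have r: "r \<in> {1..<m}" and d: "dec m f r" by auto
    have "f r \<in> {1,2,3}" using v r by auto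
    moreover have "f r \<noteq> 1" using core_1[OF kv] d by blast
    ultimately consider "f r = 2" | "f r = 3" by auto
    then show "r \<in> ({i\<in>{1..p}. f i = 3} \<union> ?C) \<union> {r\<in>{p+1..<m}. f r = 2}"
    proof cases
      case 1
      show ?thesis
      proof (cases "r \<le> p")
        case True
        obtain j1 j2 where j: "1 \<le> j1" "1 \<le> j2" "j1 + j2 = r" "f j1 = 1" "f j2 = 1"
          using core_2[OF kv r 1] d by blast
        have "r \<in> ?C" using j True 1 r by (intro CollectI conjI bexI[of _ j1] bexI[of _ j2]) auto
        then show ?thesis by blast
      next
        case False then show ?thesis using r 1 by auto
      qed
    next
      case 2
      then have "r + 3 \<le> 2 * hh m f" using core_3[OF kv hm r] by simp
      then have "r \<le> p" using pdef by linarith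
      then show ?thesis using r 2 by auto
    qed
  next
    fix r assume "r \<in> ({i\<in>{1..p}. f i = 3} \<union> ?C) \<union> {r\<in>{p+1..<m}. f r = 2}"
    then consider (a) "r \<in> {1..p}" "f r = 3" | (b) "r \<in> ?C" | (c) "r \<in> {p+1..<m}" "f r = 2" by blast
    then show "r \<in> {r\<in>{1..<m}. dec m f r}"
    proof cases
      case a
      then have r: "r \<in> {1..<m}" using pm by auto
      then show ?thesis using core_3[OF kv hm r] a by auto
    next
      case b
      then have r: "r \<in> {1..<m}" using pm by auto
      from b obtain j1 j2 where j: "j1 \<in> {1..p}" "j2 \<in> {1..p}" "j1 + j2 = r" "f j1 = 1" "f j2 = 1" "f r = 2" by blast
      have "dec m f r" using core_2[OF kv r \<open>f r = 2\<close>] j by auto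
      then show ?thesis using r by auto
    next
      case c
      then have r: "r \<in> {1..<m}" by auto
      have "2 * hh m f \<le> r" using c pdef by auto
      then show ?thesis using core_2big[OF kv r] c r by auto
    qed
  qed
  have "card {r\<in>{1..<m}. dec m f r} = card ({i\<in>{1..p}. f i = 3} \<union> ?C) + card {r\<in>{p+1..<m}. f r = 2}"
    unfolding seteq by (rule card_Un_disjoint) auto
  also have "card ({i\<in>{1..p}. f i = 3} \<union> ?C) = card {i\<in>{1..p}. f i = 3} + card ?C"
    by (rule card_Un_disjoint) auto
  finally show "card {r\<in>{1..<m}. dec m f r} = cnt_b (map f [1..<p+1]) + cnt_c (map f [1..<p+1]) + card {r\<in>{p+1..<m}. f r = 2}"
    unfolding cnt_b_map cnt_c_map by (simp del: upt_Suc)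
qed

lemma card_nondec:
  "card {r\<in>{1..<m}. \<not> dec m f r} + card {r\<in>{1..<m}. dec m f r} = m - 1"
proof -
  have "card {r\<in>{1..<m}. \<not> dec m f r} + card {r\<in>{1..<m}. dec m f r} =
        card ({r\<in>{1..<m}. \<not> dec m f r} \<union> {r\<in>{1..<m}. dec m f r})"
    by (rule card_Un_disjoint[symmetric]) auto
  also have "{r\<in>{1..<m}. \<not> dec m f r} \<union> {r\<in>{1..<m}. dec m f r} = {1..<m}" by auto
  finally show ?thesis by simp
qed

lemma sum_hh: "kvalid m f \<Longrightarrow> (\<Sum>r\<in>{1..<m}. f r) = (m - 1) + hh m f"
proof -
  assume kv: "kvalid m f"
  have "(\<Sum>r\<in>{1..<m}. f r) = (\<Sum>r\<in>{1..<m}. ((f r - 1) + 1))"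
  proof (rule sum.cong)
    fix x assume "x \<in> {1..<m}"
    then have "1 \<le> f x" using kv_ge1[OF kv] by blast
    then show "f x = f x - 1 + 1" by simp
  qed simp
  also have "\<dots> = hh m f + (\<Sum>r\<in>{1..<m}. 1)" unfolding hh_def by (rule sum.distrib)
  also have "\<dots> = hh m f + (m - 1)" by simp
  finally show ?thesis by simp
qed


definition vec :: "nat list \<Rightarrow> nat set \<Rightarrow> nat \<Rightarrow> nat" where
  "vec xs R i = (if 1 \<le> i \<and> i \<le> length xs then xs ! (i - 1) else if i \<in> R then 2 else 1)"

lemma cnt_nil: "cnt_a [] = 0" "cnt_b [] = 0" "cnt_c [] = 0"
  unfolding cnt_a_def cnt_b_def cnt_c_def by auto

lemma Y_props:
  assumes "xs \<in> Y k"
  shows "-1 \<le> k \<and> length xs = nat (2 * k + 1) \<and> set xs \<subseteq> {1,2,3} \<and>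
    (\<forall>i1\<in>{1..length xs}. \<forall>i2\<in>{1..length xs}. \<forall>i3\<in>{1..length xs}.
              i1 + i2 = i3 \<longrightarrow> (xs ! (i1 - 1), xs ! (i2 - 1), xs ! (i3 - 1)) \<noteq> (1, 1, 3)) \<and>
    int (cnt_a xs) + 2 * int (cnt_b xs) \<le> k + 1"
proof (cases "k = -1")
  case True
  then have "xs = []" using assms unfolding Y_def by simp
  then show ?thesis using True by (simp add: cnt_nil)
next
  case False
  then show ?thesis using assms unfolding Y_def by auto
qed

lemma Y_finite: "finite (Y k)"
proof -
  have "Y k \<subseteq> {xs. set xs \<subseteq> {1,2,3} \<and> length xs = nat (2 * k + 1)}"
    using Y_props by blast
  moreover have "finite {xs. set xs \<subseteq> {1::nat,2,3} \<and> length xs = nat (2 * k + 1)}"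
    by (rule finite_lists_length_eq) simp
  ultimately show ?thesis by (rule finite_subset)
qed

lemma tr_basic:
  fixes g :: nat and l k :: int
  assumes gl: "4 * l + 3 \<le> int g" and k: "k \<in> {-1..l}" and xs: "xs \<in> Y k"
    and R: "R \<subseteq> {nat (2 * k + 2)..<nat (int g - k)}"
    and cR: "card R = nat (k + 1 - int (cnt_a xs) - 2 * int (cnt_b xs))"
    and mdef: "m = nat (int g - k)" and ndef: "n = length xs" and fdef: "f = vec xs R"
  shows "int m = int g - k" "n < m" "R \<subseteq> {n + 1..<m}" "int n = (if k = -1 then 0 else 2 * k + 1)"
    "\<forall>i\<in>{1..n}. f i = xs ! (i - 1)" "\<forall>i\<in>{1..n}. f i \<in> {1,2,3}"
    "\<forall>i. n < i \<longrightarrow> f i \<in> {1,2}"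
    "map f [1..<n+1] = xs" "{r \<in> {n + 1..<m}. f r = 2} = R"
    "kvalid m f" "int (hh m f) = k + 1" "3 * hh m f \<le> m" "2 * hh m f - 1 = n"
proof -
  have Yp: "-1 \<le> k \<and> length xs = nat (2 * k + 1) \<and> set xs \<subseteq> {1,2,3} \<and>
    (\<forall>i1\<in>{1..length xs}. \<forall>i2\<in>{1..length xs}. \<forall>i3\<in>{1..length xs}.
              i1 + i2 = i3 \<longrightarrow> (xs ! (i1 - 1), xs ! (i2 - 1), xs ! (i3 - 1)) \<noteq> (1, 1, 3)) \<and>
    int (cnt_a xs) + 2 * int (cnt_b xs) \<le> k + 1" using Y_props[OF xs] .
  have kl: "-1 \<le> k" "k \<le> l" using k by auto
  show mi: "int m = int g - k" using mdef kl gl by simp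
  show ni: "int n = (if k = -1 then 0 else 2 * k + 1)" using Yp ndef kl by auto
  show nm: "n < m" using mi ni kl gl by (cases "k = -1") auto
  have Rfin: "finite R" using R finite_subset by blast
  show Rsub: "R \<subseteq> {n + 1..<m}"
  proof (cases "k = -1")
    case True
    then have "xs = []" using xs unfolding Y_def by simp
    then have "card R = 0" using cR True by (simp add: cnt_nil)
    then have "R = {}" using Rfin by simp
    then show ?thesis by simp
  next
    case False
    then have "nat (2 * k + 2) = n + 1" using ni kl by auto
    then show ?thesis using R mdef by simp
  qed
  show fx: "\<forall>i\<in>{1..n}. f i = xs ! (i - 1)" unfolding fdef vec_def ndef by auto
  show fv: "\<forall>i\<in>{1..n}. f i \<in> {1,2,3}"
  proof
    fix i assume i: "i \<in> {1..n}"
    then have "xs ! (i - 1) \<in> set xs" using ndef by auto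
    then show "f i \<in> {1,2,3}" using fx i Yp by auto
  qed
  show fo: "\<forall>i. n < i \<longrightarrow> f i \<in> {1,2}" unfolding fdef vec_def ndef by auto
  show mp: "map f [1..<n+1] = xs"
  proof (rule nth_equalityI)
    show "length (map f [1..<n+1]) = length xs" using ndef by (simp del: upt_Suc)
  next
    fix i assume "i < length (map f [1..<n+1])"
    then have i: "i + 1 \<in> {1..n}" by (simp del: upt_Suc)
    have "map f [1..<n+1] ! (i + 1 - 1) = f (i + 1)" by (rule map_upt_nth[OF i])
    then show "map f [1..<n+1] ! i = xs ! i" using fx i by simp
  qed
  show Req: "{r \<in> {n + 1..<m}. f r = 2} = R"
  proof (rule set_eqI, rule iffI)
    fix r assume "r \<in> {r \<in> {n + 1..<m}. f r = 2}"
    then show "r \<in> R" unfolding fdef vec_def ndef by (auto split: if_splits)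
  next
    fix r assume "r \<in> R"
    then show "r \<in> {r \<in> {n + 1..<m}. f r = 2}" using Rsub unfolding fdef vec_def ndef by auto
  qed
  have f123: "\<forall>i\<in>{1..<m}. f i \<in> {1,2,3}"
  proof
    fix i assume i: "i \<in> {1..<m}"
    show "f i \<in> {1,2,3}"
    proof (cases "i \<le> n")
      case True then show ?thesis using fv i by auto
    next
      case False then have "f i \<in> {1,2}" using fo by simp
      then show ?thesis by auto
    qed
  qed
  show kv: "kvalid m f"
    unfolding kvalid_def
  proof (intro conjI ballI allI impI)
    show "1 \<le> m" using nm by simp
  next
    fix r assume "r \<in> {1..<m}" then show "1 \<le> f r" using f123 by fastforce
  next
    fix r s assume r: "1 \<le> r" "1 \<le> s" "r + s < m"
    have vr: "f r \<in> {1,2,3}" "f s \<in> {1,2,3}" "f (r + s) \<in> {1,2,3}" using f123 r by auto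
    show "f (r + s) \<le> f r + f s"
    proof (cases "f (r + s) = 3")
      case False then show ?thesis using vr by auto
    next
      case True
      have "r + s \<le> n"
      proof (rule ccontr)
        assume "\<not> r + s \<le> n"
        then have "f (r + s) \<in> {1,2}" using fo by simp
        then show False using True by simp
      qed
      then have ins: "r \<in> {1..length xs}" "s \<in> {1..length xs}" "r + s \<in> {1..length xs}" using r ndef by auto
      then have "(xs ! (r - 1), xs ! (s - 1), xs ! (r + s - 1)) \<noteq> (1, 1, 3)" using Yp by blast
      moreover have "xs ! (r - 1) = f r" "xs ! (s - 1) = f s" "xs ! (r + s - 1) = f (r + s)"
        using fx ins ndef by auto
      ultimately show ?thesis using True vr by auto
    qed
  next
    fix r s assume r: "r < m" "s < m" "m < r + s"
    then have "r \<in> {1..<m}" "s \<in> {1..<m}" "r + s - m \<in> {1..<m}" by auto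
    then have "f r \<ge> 1" "f s \<ge> 1" "f (r + s - m) \<le> 3" using f123 by fastforce+
    then show "f (r + s - m) \<le> f r + f s + 1" by simp
  qed
  have hs: "hh m f = cnt_a (map f [1..<n+1]) + 2 * cnt_b (map f [1..<n+1]) + card {r\<in>{n+1..<m}. f r = 2}"
    by (rule hsplit[OF nm fv]) (use fo in auto)
  then have "hh m f = cnt_a xs + 2 * cnt_b xs + card R" unfolding mp Req .
  then show hi: "int (hh m f) = k + 1" using cR Yp by simp
  show "3 * hh m f \<le> m" using hi mi gl kl by simp
  show "2 * hh m f - 1 = n" using hi ni by (cases "k = -1") auto
qed


definition Lset :: "nat \<Rightarrow> int \<Rightarrow> nat set set" where
  "Lset g l = {S \<in> semigroups_of_genus g. int (embedding_dim S) = int g - l}"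

definition Xs :: "int \<Rightarrow> int \<Rightarrow> nat list set" where
  "Xs k l = {xs \<in> Y k. int (cnt_a xs) + int (cnt_b xs) - int (cnt_c xs) = 2 * k + 1 - l}"

definition Rs :: "nat \<Rightarrow> int \<Rightarrow> nat list \<Rightarrow> nat set set" where
  "Rs g k xs = {R. R \<subseteq> {nat (2 * k + 2)..<nat (int g - k)} \<and>
      card R = nat (k + 1 - int (cnt_a xs) - 2 * int (cnt_b xs))}"

definition TR :: "nat \<Rightarrow> int \<Rightarrow> (int \<times> nat list \<times> nat set) set" where
  "TR g l = (SIGMA k:{-1..l}. SIGMA xs:Xs k l. Rs g k xs)"

definition Psi :: "nat \<Rightarrow> int \<times> nat list \<times> nat set \<Rightarrow> nat set" where
  "Psi g t = (case t of (k, xs, R) \<Rightarrow> sgK (nat (int g - k)) (vec xs R))"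

lemma Psi_in:
  assumes gl: "4 * l + 3 \<le> int g" and t: "(k, xs, R) \<in> TR g l"
  shows "Psi g (k, xs, R) \<in> Lset g l"
proof -
  have k: "k \<in> {-1..l}" and xs: "xs \<in> Y k"
    and cond: "int (cnt_a xs) + int (cnt_b xs) - int (cnt_c xs) = 2 * k + 1 - l"
    and R: "R \<subseteq> {nat (2 * k + 2)..<nat (int g - k)}"
    and cR: "card R = nat (k + 1 - int (cnt_a xs) - 2 * int (cnt_b xs))"
    using t unfolding TR_def Xs_def Rs_def by auto
  define m where "m = nat (int g - k)"
  define n where "n = length xs"
  define f where "f = vec xs R"
  note tb = tr_basic[OF gl k xs R cR m_def n_def f_def]
  have kv: "kvalid m f" by (rule tb(10))
  have Yp: "int (cnt_a xs) + 2 * int (cnt_b xs) \<le> k + 1" using Y_props[OF xs] by simp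
  have cRi: "int (card R) = k + 1 - int (cnt_a xs) - 2 * int (cnt_b xs)" using cR Yp by simp
  have S: "Psi g (k, xs, R) = sgK m f" unfolding Psi_def m_def f_def by simp
  have ns: "numerical_semigroup (sgK m f)" by (rule sgK_numsg[OF kv])
  have m1: "1 \<le> m" using kv unfolding kvalid_def by simp
  have "genus (sgK m f) = (m - 1) + hh m f" using sgK_genus[OF kv] sum_hh[OF kv] by simp
  then have "int (genus (sgK m f)) = int m - 1 + int (hh m f)" using m1 by simp
  then have gen: "genus (sgK m f) = g" using tb(1) tb(11) by simp
  have cc: "card {r\<in>{1..<m}. dec m f r} = cnt_b (map f [1..<n+1]) + cnt_c (map f [1..<n+1]) + card {r\<in>{n+1..<m}. f r = 2}"
    using core_count(4)[OF kv tb(12) tb(13)[symmetric]] by simp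
  then have cc': "card {r\<in>{1..<m}. dec m f r} = cnt_b xs + cnt_c xs + card R"
    unfolding tb(8) tb(9) .
  have ed: "embedding_dim (sgK m f) = 1 + card {r \<in> {1..<m}. \<not> dec m f r}" by (rule sgK_edim[OF kv])
  have "int (embedding_dim (sgK m f)) = int m - int (card {r\<in>{1..<m}. dec m f r})"
    using ed card_nondec[of m f] m1 by simp
  also have "\<dots> = int g - l" using cc' cRi cond tb(1) by simp
  finally show ?thesis unfolding Lset_def semigroups_of_genus_def S using ns gen by simp
qed

lemma Psi_inj:
  assumes gl: "4 * l + 3 \<le> int g"
  shows "inj_on (Psi g) (TR g l)"
proof (rule inj_onI)
  fix t t' assume t: "t \<in> TR g l" and t': "t' \<in> TR g l" and e: "Psi g t = Psi g t'"
  obtain k xs R where tt: "t = (k, xs, R)" by (cases t) auto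
  obtain k' xs' R' where tt': "t' = (k', xs', R')" by (cases t') auto
  have k: "k \<in> {-1..l}" and xs: "xs \<in> Y k"
    and R: "R \<subseteq> {nat (2 * k + 2)..<nat (int g - k)}"
    and cR: "card R = nat (k + 1 - int (cnt_a xs) - 2 * int (cnt_b xs))"
    using t tt unfolding TR_def Xs_def Rs_def by auto
  have k': "k' \<in> {-1..l}" and xs': "xs' \<in> Y k'"
    and R': "R' \<subseteq> {nat (2 * k' + 2)..<nat (int g - k')}"
    and cR': "card R' = nat (k' + 1 - int (cnt_a xs') - 2 * int (cnt_b xs'))"
    using t' tt' unfolding TR_def Xs_def Rs_def by auto
  define m where "m = nat (int g - k)"
  define n where "n = length xs"
  define f where "f = vec xs R"
  define m' where "m' = nat (int g - k')"
  define n' where "n' = length xs'"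
  define f' where "f' = vec xs' R'"
  note tb = tr_basic[OF gl k xs R cR m_def n_def f_def]
  note tb' = tr_basic[OF gl k' xs' R' cR' m'_def n'_def f'_def]
  have "sgK m f = sgK m' f'" using e unfolding tt tt' Psi_def m_def f_def m'_def f'_def by simp
  then have u: "m = m'" "\<forall>r\<in>{1..<m}. f r = f' r" using sgK_unique[OF tb(10) tb'(10)] by auto
  have kk: "k = k'" using u(1) tb(1) tb'(1) by simp
  have nn: "n = n'" using tb(4) tb'(4) kk by (cases "k' = -1") auto
  have xx: "xs = xs'"
  proof (rule nth_equalityI)
    show "length xs = length xs'" using nn n_def n'_def by simp
  next
    fix i assume i: "i < length xs"
    have i1: "i + 1 \<in> {1..n}" "i + 1 \<in> {1..n'}" using i n_def nn by auto
    have "i + 1 \<in> {1..<m}" using i1 tb(2) by auto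
    then have "f (i + 1) = f' (i + 1)" using u by blast
    then show "xs ! i = xs' ! i" using tb(5) tb'(5) i1 by auto
  qed
  have RR: "R = R'"
  proof -
    have "R = {r \<in> {n + 1..<m}. f r = 2}" using tb(9) by simp
    also have "\<dots> = {r \<in> {n' + 1..<m'}. f' r = 2}"
      using u nn by (intro Collect_cong) auto
    also have "\<dots> = R'" using tb'(9) by simp
    finally show ?thesis .
  qed
  show "t = t'" using tt tt' kk xx RR by simp
qed

lemma Psi_surj:
  assumes gl: "4 * l + 3 \<le> int g" and SL: "S \<in> Lset g l"
  shows "\<exists>t\<in>TR g l. S = Psi g t"
proof -
  have ns: "numerical_semigroup S" and gS: "genus S = g" and eS: "int (embedding_dim S) = int g - l"
    using SL unfolding Lset_def semigroups_of_genus_def by auto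
  obtain m f where kv: "kvalid m f" and Seq: "S = sgK m f" using numsg_rep[OF ns] by blast
  have m1: "1 \<le> m" using kv unfolding kvalid_def by simp
  define h where "h = hh m f"
  define D where "D = card {r\<in>{1..<m}. dec m f r}"
  define p where "p = 2 * h - 1"
  define xs where "xs = map f [1..<p+1]"
  define R where "R = {r\<in>{p+1..<m}. f r = 2}"
  define k where "k = int h - 1"
  have "genus S = (m - 1) + h" using sgK_genus[OF kv] sum_hh[OF kv] Seq h_def by simp
  then have gi: "int g = int m - 1 + int h" using gS m1 by simp
  have "embedding_dim S = 1 + card {r \<in> {1..<m}. \<not> dec m f r}" using sgK_edim[OF kv] Seq by simp
  then have "int (embedding_dim S) = int m - int D" using card_nondec[of m f] m1 D_def by simp
  then have lD: "l = int h - 1 + int D" using eS gi by simp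
  have hm: "3 * hh m f \<le> m" using gl lD gi h_def by simp
  note cc = core_count[OF kv hm p_def[unfolded h_def]]
  have pm: "p < m" using cc(1) .
  have v: "\<forall>i\<in>{1..<m}. f i \<in> {1,2,3}" using cc(2) .
  have v2: "\<forall>i\<in>{p+1..<m}. f i \<in> {1,2}" using cc(3) .
  have Dc: "D = cnt_b xs + cnt_c xs + card R" using cc(4) D_def xs_def R_def by simp
  have v1: "\<forall>i\<in>{1..p}. f i \<in> {1,2,3}" using v pm by auto
  have hs: "h = cnt_a xs + 2 * cnt_b xs + card R"
    using hsplit[OF pm v1 v2] h_def xs_def R_def by simp
  have lenxs: "length xs = p" unfolding xs_def by (simp del: upt_Suc)
  have xsn: "\<forall>i\<in>{1..p}. xs ! (i - 1) = f i" unfolding xs_def using map_upt_nth by blast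
  have kin: "k \<in> {-1..l}" using lD k_def by simp
  have xsY: "xs \<in> Y k"
  proof (cases "h = 0")
    case True
    then have "p = 0" using p_def by simp
    then have "xs = []" using lenxs by simp
    then show ?thesis using True k_def unfolding Y_def by simp
  next
    case False
    then have kne: "k \<noteq> -1" "0 \<le> k" using k_def by auto
    have len: "length xs = nat (2 * k + 1)" using lenxs p_def k_def False by simp
    have set: "set xs \<subseteq> {1,2,3}"
    proof
      fix x assume "x \<in> set xs"
      then obtain i where i: "i < length xs" "xs ! i = x" by (auto simp: in_set_conv_nth)
      then have i1: "i + 1 \<in> {1..p}" using lenxs by auto
      then have "xs ! (i + 1 - 1) = f (i + 1)" using xsn by blast
      then have "x = f (i + 1)" using i by simp
      moreover have "i + 1 \<in> {1..<m}" using i1 pm by auto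
      ultimately show "x \<in> {1,2,3}" using v by auto
    qed
    have no: "\<forall>i1\<in>{1..length xs}. \<forall>i2\<in>{1..length xs}. \<forall>i3\<in>{1..length xs}.
              i1 + i2 = i3 \<longrightarrow> (xs ! (i1 - 1), xs ! (i2 - 1), xs ! (i3 - 1)) \<noteq> (1, 1, 3)"
    proof (intro ballI impI)
      fix i1 i2 i3 assume i: "i1 \<in> {1..length xs}" "i2 \<in> {1..length xs}" "i3 \<in> {1..length xs}" "i1 + i2 = i3"
      have "f (i1 + i2) \<le> f i1 + f i2" using kv_nonwrap[OF kv, of i1 i2] i lenxs pm by auto
      moreover have "xs ! (i1 - 1) = f i1" "xs ! (i2 - 1) = f i2" "xs ! (i3 - 1) = f i3"
        using xsn i lenxs by auto
      ultimately show "(xs ! (i1 - 1), xs ! (i2 - 1), xs ! (i3 - 1)) \<noteq> (1, 1, 3)" using i(4) by auto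
    qed
    have ab: "int (cnt_a xs) + 2 * int (cnt_b xs) \<le> k + 1" using hs k_def by simp
    show ?thesis unfolding Y_def using kne len set no ab by simp
  qed
  have xsX: "xs \<in> Xs k l" unfolding Xs_def using xsY lD Dc hs k_def by simp
  have mk: "nat (int g - k) = m" using gi k_def by simp
  have RR: "R \<in> Rs g k xs"
  proof -
    have "nat (2 * k + 2) \<le> p + 1" using k_def p_def by simp
    then have "R \<subseteq> {nat (2 * k + 2)..<nat (int g - k)}" unfolding R_def mk by auto
    moreover have "card R = nat (k + 1 - int (cnt_a xs) - 2 * int (cnt_b xs))" using hs k_def by simp
    ultimately show ?thesis unfolding Rs_def by simp
  qed
  have tin: "(k, xs, R) \<in> TR g l" unfolding TR_def using kin xsX RR by simp
  have "Psi g (k, xs, R) = sgK m (vec xs R)" unfolding Psi_def using mk by simp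
  also have "\<dots> = sgK m f"
  proof (rule sgK_cong)
    show "0 < m" using m1 by simp
    show "\<forall>r\<in>{1..<m}. vec xs R r = f r"
    proof
      fix r assume r: "r \<in> {1..<m}"
      show "vec xs R r = f r"
      proof (cases "r \<le> p")
        case True then show ?thesis unfolding vec_def using lenxs xsn r by auto
      next
        case False
        then have "r \<in> {p+1..<m}" using r by auto
        then have "f r \<in> {1,2}" using v2 by blast
        then show ?thesis unfolding vec_def R_def using lenxs False r by auto
      qed
    qed
  qed
  finally show ?thesis using tin Seq by metis
qed


lemma Psi_bij:
  assumes gl: "4 * l + 3 \<le> int g"
  shows "bij_betw (Psi g) (TR g l) (Lset g l)"
proof -
  have "Psi g ` TR g l \<subseteq> Lset g l"
  proof
    fix S assume "S \<in> Psi g ` TR g l"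
    then obtain t where t: "t \<in> TR g l" "S = Psi g t" by blast
    obtain k xs R where "t = (k, xs, R)" by (cases t) auto
    then show "S \<in> Lset g l" using Psi_in[OF gl] t by simp
  qed
  moreover have "Lset g l \<subseteq> Psi g ` TR g l" using Psi_surj[OF gl] by blast
  ultimately show ?thesis unfolding bij_betw_def using Psi_inj[OF gl] by blast
qed

lemma card_Rs:
  assumes gl: "4 * l + 3 \<le> int g" and k: "k \<in> {-1..l}"
  shows "card (Rs g k xs) = nat (int g - 3 * k - 2) choose nat (k + 1 - int (cnt_a xs) - 2 * int (cnt_b xs))"
proof -
  have "card (Rs g k xs) = card {nat (2 * k + 2)..<nat (int g - k)} choose nat (k + 1 - int (cnt_a xs) - 2 * int (cnt_b xs))"
    unfolding Rs_def by (rule n_subsets) simp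
  moreover have "card {nat (2 * k + 2)..<nat (int g - k)} = nat (int g - 3 * k - 2)"
    using gl k by auto
  ultimately show ?thesis by simp
qed

lemma finite_Xs: "finite (Xs k l)"
  unfolding Xs_def using Y_finite by simp

lemma finite_Rs: "finite (Rs g k xs)"
proof -
  have "Rs g k xs \<subseteq> Pow {nat (2 * k + 2)..<nat (int g - k)}" unfolding Rs_def by auto
  then show ?thesis by (rule finite_subset) simp
qed

theorem theorem8p10:
  fixes l :: int and g :: nat
  assumes "l \<ge> -1" and "int g \<ge> 4 * l + 3"
  shows "int (card {S \<in> semigroups_of_genus g. int (embedding_dim S) = int g - l}) =
    (\<Sum>k\<in>{-1..l}. \<Sum>xs\<in>{xs \<in> Y k. int (cnt_a xs) + int (cnt_b xs) - int (cnt_c xs) = 2 * k + 1 - l}.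
        int ((nat (int g - 3 * k - 2)) choose (nat (k + 1 - int (cnt_a xs) - 2 * int (cnt_b xs)))))"
proof -
  have gl: "4 * l + 3 \<le> int g" using assms(2) by simp
  have "card {S \<in> semigroups_of_genus g. int (embedding_dim S) = int g - l} = card (Lset g l)"
    unfolding Lset_def by simp
  also have "\<dots> = card (TR g l)" using bij_betw_same_card[OF Psi_bij[OF gl]] by simp
  also have "\<dots> = (\<Sum>k\<in>{-1..l}. card (SIGMA xs:Xs k l. Rs g k xs))"
    unfolding TR_def
    by (rule card_SigmaI) (auto intro!: finite_SigmaI finite_Xs finite_Rs)
  also have "\<dots> = (\<Sum>k\<in>{-1..l}. \<Sum>xs\<in>Xs k l. card (Rs g k xs))"
    by (rule sum.cong) (auto intro!: card_SigmaI finite_Xs finite_Rs)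
  also have "\<dots> = (\<Sum>k\<in>{-1..l}. \<Sum>xs\<in>Xs k l.
        (nat (int g - 3 * k - 2)) choose (nat (k + 1 - int (cnt_a xs) - 2 * int (cnt_b xs))))"
    by (intro sum.cong refl) (use card_Rs[OF gl] in blast)
  finally have "int (card {S \<in> semigroups_of_genus g. int (embedding_dim S) = int g - l}) =
     int (\<Sum>k\<in>{-1..l}. \<Sum>xs\<in>Xs k l.
        (nat (int g - 3 * k - 2)) choose (nat (k + 1 - int (cnt_a xs) - 2 * int (cnt_b xs))))" by simp
  also have "\<dots> = (\<Sum>k\<in>{-1..l}. \<Sum>xs\<in>Xs k l.
        int ((nat (int g - 3 * k - 2)) choose (nat (k + 1 - int (cnt_a xs) - 2 * int (cnt_b xs)))))"
    by (simp add: of_nat_sum)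
  finally show ?thesis unfolding Xs_def .
qed

end
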